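(* Let $(X_v)_{v\in V}$ be a BN on the DAG $\mathcal G$ with states $\mathcal A$, let $f:\mathcal A\to\mathcal B$ and $U_v=f(X_v)$. Let $v\in V$ and $b_{pa(v)}\in\mathcal B^{pa(v)}$ be such that $f^{-1}(b_{pa(v)})$ consists of a single element $a_{pa(v)}\in\mathcal A^{pa(v)}$. Then for every $b_{nd^*(v)}\in\mathcal B^{nd^*(v)}$ with $b_{nd^*(v)}|_{pa(v)}=b_{pa(v)}$ and $\mathbb P(U_{nd(v)}=b_{nd(v)})>0$, $$\mathbb P(U_v=b_v\mid U_{nd(v)}=b_{nd(v)})=\mathbb P(U_v=b_v\mid U_{pa(v)}=b_{pa(v)}).$$
   Context: $\mathcal G=(V,E)$ is a finite DAG; $pa(v)$ is the set of parents of $v$; $nd(v)$ is the set of non-descendants of $v$ (vertices other than $v$ not reachable from $v$ by a directed path), $nd^*(v)=nd(v)\cup\{v\}$. A BN on $\mathcal G$ with states $\mathcal A$ (finite set) is a random vector $(X_v)_{v\in V}$ with values in $\mathcal A^V$ whose law factorises as $\mathbb P(X=x)=\prod_{v}\mathbb P(X_v=x_v\mid X_{pa(v)}=x_{pa(v)})$. $f:\mathcal A\to\mathcal B$ is a surjection onto a finite set, applied coordinatewise; $f^{-1}(b_W)\subseteq\mathcal A^W$ is the preimage of $b_W\in\mathcal B^W$; for $W'\subseteq W$, $b_{W'}=b_W|_{W'}$ is the restriction. $\mathbb P(U_W=b_W)$ is the joint probability of the coordinates in $W$. *)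

theory Defs
  imports "HOL-Probability.Probability" "HOL-Library.FuncSet"
begin

text \<open>DAG given by an edge relation E on a finite vertex type 'v; (u,w) \<in> E means u \<rightarrow> w.\<close>

definition parents :: "('v \<times> 'v) set \<Rightarrow> 'v \<Rightarrow> 'v set" where
  "parents E v = {u. (u, v) \<in> E}"

definition nondesc :: "('v \<times> 'v) set \<Rightarrow> 'v \<Rightarrow> 'v set" where
  "nondesc E v = {w. w \<noteq> v \<and> (v, w) \<notin> E\<^sup>+}"

definition coord_event :: "'v set \<Rightarrow> ('v \<Rightarrow> 'a) \<Rightarrow> ('v \<Rightarrow> 'a) set" where
  "coord_event W a = {x. \<forall>w\<in>W. x w = a w}"

text \<open>Event that the coordinates in W of U = f(X) agree with b.\<close>
definition img_event :: "('a \<Rightarrow> 'b) \<Rightarrow> 'v set \<Rightarrow> ('v \<Rightarrow> 'b) \<Rightarrow> ('v \<Rightarrow> 'a) set" where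
  "img_event f W b = {x. \<forall>w\<in>W. f (x w) = b w}"

text \<open>Elementary conditional probability P(A | C) = P(A \<inter> C) / P(C) (= 0 if P(C) = 0).\<close>
definition cond_prob :: "'x pmf \<Rightarrow> 'x set \<Rightarrow> 'x set \<Rightarrow> real" where
  "cond_prob p A C = measure_pmf.prob p (A \<inter> C) / measure_pmf.prob p C"

text \<open>p is the law of a BN on the DAG E (vertex set = UNIV of the finite type 'v).\<close>
definition is_BN :: "('v::finite \<times> 'v) set \<Rightarrow> ('v \<Rightarrow> 'a::finite) pmf \<Rightarrow> bool" where
  "is_BN E p \<longleftrightarrow> acyclic E \<and>
     (\<forall>x. pmf p x = (\<Prod>v\<in>UNIV. cond_prob p (coord_event {v} x) (coord_event (parents E v) x)))"

end

theory Submission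
  imports Defs
begin

lemma prob_sum:
  fixes p :: "('v::finite \<Rightarrow> 'a::finite) pmf"
  shows "measure_pmf.prob p S = sum (pmf p) S"
  by (rule measure_measure_pmf_finite) simp

lemma coord_upd: "z \<notin> S \<Longrightarrow> coord_event S (x(z:=a)) = coord_event S x"
  unfolding coord_event_def by auto

lemma sum_over_a:
  fixes p :: "('v::finite \<Rightarrow> 'a::finite) pmf"
  assumes "z \<notin> S"
  shows "measure_pmf.prob p (coord_event S x) =
         (\<Sum>a\<in>UNIV. measure_pmf.prob p (coord_event (insert z S) (x(z:=a))))"
proof -
  have "(\<Sum>a\<in>UNIV. sum (pmf p) {y. y \<in> coord_event S x \<and> y z = a}) = sum (pmf p) (coord_event S x)"
    by (rule sum.group) auto
  moreover have "\<And>a. {y. y \<in> coord_event S x \<and> y z = a} = coord_event (insert z S) (x(z:=a))"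
    using assms unfolding coord_event_def by auto
  ultimately show ?thesis by (simp add: prob_sum)
qed

lemma prob_insert_cond:
  fixes p :: "('v::finite \<Rightarrow> 'a::finite) pmf"
  shows "measure_pmf.prob p (coord_event (insert v S) z)
       = cond_prob p (coord_event {v} z) (coord_event S z) * measure_pmf.prob p (coord_event S z)"
proof -
  have eq: "coord_event {v} z \<inter> coord_event S z = coord_event (insert v S) z"
    unfolding coord_event_def by auto
  show ?thesis
  proof (cases "measure_pmf.prob p (coord_event S z) = 0")
    case True
    have "measure_pmf.prob p (coord_event (insert v S) z) \<le> measure_pmf.prob p (coord_event S z)"
      by (rule measure_pmf.finite_measure_mono) (auto simp: coord_event_def)
    then show ?thesis using True by (simp add: measure_nonneg antisym)
  next
    case False
    then show ?thesis unfolding cond_prob_def eq by simp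
  qed
qed

lemma coord_agree: "(\<forall>w\<in>S. y w = y' w) \<Longrightarrow> coord_event S y = coord_event S y'"
  unfolding coord_event_def by auto

lemma kern:
  fixes K :: "'v::finite \<Rightarrow> ('v \<Rightarrow> 'a::finite) \<Rightarrow> real"
  assumes acyc: "acyclic E"
    and dep: "\<And>u y y'. (\<forall>w\<in>insert u (parents E u). y w = y' w) \<Longrightarrow> K u y = K u y'"
    and one: "\<And>u y. (\<Sum>a\<in>UNIV. K u (y(u:=a))) = 1"
  shows "card (- T) = n \<Longrightarrow> (\<forall>w\<in>T. parents E w \<subseteq> T) \<Longrightarrow>
    (\<Sum>y\<in>coord_event T x. \<Prod>u\<in>UNIV. K u y) = (\<Prod>u\<in>T. K u x)"
proof (induction n arbitrary: T x rule: less_induct)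
  case (less n)
  show ?case
  proof (cases "T = UNIV")
    case True
    have "coord_event T x = {x}" using True unfolding coord_event_def by auto
    then show ?thesis using True by simp
  next
    case False
    then obtain w where "w \<in> - T" by auto
    have "wf E" by (rule finite_acyclic_wf[OF _ acyc]) simp
    then obtain z where z: "z \<in> - T" "\<And>y. (y, z) \<in> E \<Longrightarrow> y \<notin> - T"
      using wfE_min[OF _ \<open>w \<in> - T\<close>] by metis
    have paz: "parents E z \<subseteq> T" using z(2) unfolding parents_def by auto
    have zT: "z \<notin> T" using z(1) by auto
    let ?T' = "insert z T"
    have c: "card (- ?T') < n"
      using less.prems(1) zT by (metis Compl_insert card_Diff1_less finite ComplI)
    have anc': "\<forall>w\<in>?T'. parents E w \<subseteq> ?T'" using less.prems(2) paz by auto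
    have IH: "\<And>y. (\<Sum>y\<in>coord_event ?T' y. \<Prod>u\<in>UNIV. K u y) = (\<Prod>u\<in>?T'. K u y)"
      using less.IH[OF c refl anc'] .
    have kT: "\<And>a. (\<Prod>u\<in>T. K u (x(z:=a))) = (\<Prod>u\<in>T. K u x)"
    proof (rule prod.cong[OF refl])
      fix a u assume "u \<in> T"
      then have "z \<notin> insert u (parents E u)" using zT less.prems(2) by auto
      then show "K u (x(z:=a)) = K u x" by (intro dep) auto
    qed
    have "(\<Sum>a\<in>UNIV. sum (\<lambda>y. \<Prod>u\<in>UNIV. K u y) {y. y \<in> coord_event T x \<and> y z = a})
        = sum (\<lambda>y. \<Prod>u\<in>UNIV. K u y) (coord_event T x)"
      by (rule sum.group) auto
    moreover have "\<And>a. {y. y \<in> coord_event T x \<and> y z = a} = coord_event ?T' (x(z:=a))"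
      using zT unfolding coord_event_def by auto
    ultimately have "(\<Sum>y\<in>coord_event T x. \<Prod>u\<in>UNIV. K u y) = (\<Sum>a\<in>UNIV. (\<Prod>u\<in>?T'. K u (x(z:=a))))"
      using IH by simp
    also have "\<dots> = (\<Prod>u\<in>T. K u x) * (\<Sum>a\<in>UNIV. K z (x(z:=a)))"
      using zT by (simp add: kT sum_distrib_left mult.commute)
    also have "\<dots> = (\<Prod>u\<in>T. K u x)" by (simp add: one)
    finally show ?thesis .
  qed
qed

definition Kb :: "('v \<times> 'v) set \<Rightarrow> ('v \<Rightarrow> 'a::finite) pmf \<Rightarrow> 'v \<Rightarrow> ('v \<Rightarrow> 'a) \<Rightarrow> real" where
  "Kb E p u y = (if measure_pmf.prob p (coord_event (parents E u) y) = 0 then 1 / real CARD('a)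
                 else cond_prob p (coord_event {u} y) (coord_event (parents E u) y))"

lemma Kb_dep: "(\<forall>w\<in>insert u (parents E u). y w = y' w) \<Longrightarrow> Kb E p u y = Kb E p u y'"
proof -
  assume a: "\<forall>w\<in>insert u (parents E u). y w = y' w"
  have "coord_event (parents E u) y = coord_event (parents E u) y'" "coord_event {u} y = coord_event {u} y'"
    using a by (auto intro!: coord_agree)
  then show ?thesis unfolding Kb_def by simp
qed

lemma Kb_one:
  fixes p :: "('v::finite \<Rightarrow> 'a::finite) pmf"
  assumes acyc: "acyclic E"
  shows "(\<Sum>a\<in>UNIV. Kb E p u (y(u:=a))) = 1"
proof -
  have unp: "u \<notin> parents E u" using acyc unfolding parents_def acyclic_def by auto
  have e2: "\<And>a. coord_event (parents E u) (y(u := a)) = coord_event (parents E u) y"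
    using unp by (simp add: coord_upd)
  let ?P = "measure_pmf.prob p (coord_event (parents E u) y)"
  show ?thesis
  proof (cases "?P = 0")
    case True
    then show ?thesis unfolding Kb_def e2 by simp
  next
    case False
    have "\<And>a. Kb E p u (y(u:=a)) = measure_pmf.prob p (coord_event (insert u (parents E u)) (y(u:=a))) / ?P"
    proof -
      fix a
      have e1: "coord_event {u} (y(u := a)) \<inter> coord_event (parents E u) (y(u := a)) =
          coord_event (insert u (parents E u)) (y(u := a))" by (auto simp: coord_event_def)
      show "Kb E p u (y(u:=a)) = measure_pmf.prob p (coord_event (insert u (parents E u)) (y(u:=a))) / ?P"
        using False unfolding Kb_def cond_prob_def e1[symmetric] e2 by simp
    qed
    then have "(\<Sum>a\<in>UNIV. Kb E p u (y(u:=a))) = (\<Sum>a\<in>UNIV. measure_pmf.prob p (coord_event (insert u (parents E u)) (y(u:=a)))) / ?P"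
      by (simp add: sum_divide_distrib)
    also have "\<dots> = ?P / ?P" using sum_over_a[OF unp, of p y] by simp
    finally show ?thesis using False by simp
  qed
qed

lemma pmf_Kb:
  fixes p :: "('v::finite \<Rightarrow> 'a::finite) pmf"
  assumes bn: "is_BN E p"
  shows "pmf p x = (\<Prod>u\<in>UNIV. Kb E p u x)"
proof -
  have acyc: "acyclic E" using bn unfolding is_BN_def by auto
  let ?q = "\<lambda>x. \<Prod>u\<in>UNIV. Kb E p u x"
  have le: "pmf p y \<le> ?q y" for y
  proof -
    have "pmf p y = (\<Prod>u\<in>UNIV. cond_prob p (coord_event {u} y) (coord_event (parents E u) y))"
      using bn unfolding is_BN_def by auto
    also have "\<dots> \<le> ?q y"
    proof (rule prod_mono)
      fix u :: 'v
      show "0 \<le> cond_prob p (coord_event {u} y) (coord_event (parents E u) y) \<and>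
            cond_prob p (coord_event {u} y) (coord_event (parents E u) y) \<le> Kb E p u y"
        unfolding Kb_def cond_prob_def by (auto simp: measure_nonneg)
    qed
    finally show ?thesis .
  qed
  have "(\<Sum>y\<in>coord_event {} x. ?q y) = (\<Prod>u\<in>{}. Kb E p u x)"
    by (rule kern[OF acyc Kb_dep Kb_one[OF acyc]]) auto
  moreover have "coord_event {} x = UNIV" unfolding coord_event_def by auto
  ultimately have s1: "(\<Sum>y\<in>UNIV. ?q y) = 1" by simp
  have s2: "(\<Sum>y\<in>UNIV. pmf p y) = 1"
    using sum_pmf_eq_1[of UNIV p] by simp
  have "(\<Sum>y\<in>UNIV. ?q y - pmf p y) = 0" using s1 s2 by (simp add: sum_subtractf)
  then have "\<forall>y\<in>UNIV. ?q y - pmf p y = 0"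
    by (subst sum_nonneg_eq_0_iff[symmetric]) (auto simp: le)
  then show ?thesis by simp
qed

lemma prob_anc:
  fixes p :: "('v::finite \<Rightarrow> 'a::finite) pmf"
  assumes bn: "is_BN E p" and anc: "\<forall>w\<in>T. parents E w \<subseteq> T"
  shows "measure_pmf.prob p (coord_event T x) = (\<Prod>u\<in>T. Kb E p u x)"
proof -
  have acyc: "acyclic E" using bn unfolding is_BN_def by auto
  have "measure_pmf.prob p (coord_event T x) = (\<Sum>y\<in>coord_event T x. \<Prod>u\<in>UNIV. Kb E p u y)"
    by (simp add: prob_sum pmf_Kb[OF bn])
  also have "\<dots> = (\<Prod>u\<in>T. Kb E p u x)"
    by (rule kern[OF acyc Kb_dep Kb_one[OF acyc] refl anc])
  finally show ?thesis .
qed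

lemma lemG:
  fixes p :: "('v::finite \<Rightarrow> 'a::finite) pmf"
  assumes vT: "v \<notin> T"
    and det: "\<And>x y. (\<forall>w\<in>T. x w = y w) \<Longrightarrow> x \<in> C \<Longrightarrow> y \<in> C"
    and hyp: "\<And>y. y \<in> C \<Longrightarrow> measure_pmf.prob p (coord_event (insert v T) (y(v:=a)))
                 = measure_pmf.prob p (coord_event T y) * Ka"
  shows "measure_pmf.prob p {x\<in>C. x v = a} = measure_pmf.prob p C * Ka"
proof -
  let ?I = "(\<lambda>x. restrict x T) ` C"
  have yI: "y \<in> C" "\<And>w. w \<notin> T \<Longrightarrow> y w = undefined" if yy: "y \<in> ?I" for y
  proof -
    obtain x where x: "x \<in> C" "y = restrict x T" using yy by auto
    show "y \<in> C" using det[of x y] x by auto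
    show "\<And>w. w \<notin> T \<Longrightarrow> y w = undefined" using x by auto
  qed
  have "(\<Sum>y\<in>?I. sum (pmf p) {x. x \<in> C \<and> restrict x T = y}) = sum (pmf p) C"
    by (rule sum.group) auto
  moreover have "{x. x \<in> C \<and> restrict x T = y} = coord_event T y" if "y \<in> ?I" for y
  proof (intro set_eqI iffI)
    fix x assume "x \<in> {x. x \<in> C \<and> restrict x T = y}"
    then show "x \<in> coord_event T y" unfolding coord_event_def by auto
  next
    fix x assume x: "x \<in> coord_event T y"
    then have "x \<in> C" using det[of y x] yI[OF that] unfolding coord_event_def by auto
    moreover have "restrict x T = y" using x yI(2)[OF that] unfolding coord_event_def restrict_def
      by (auto simp: fun_eq_iff)
    ultimately show "x \<in> {x. x \<in> C \<and> restrict x T = y}" by auto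
  qed
  ultimately have pC: "measure_pmf.prob p C = (\<Sum>y\<in>?I. measure_pmf.prob p (coord_event T y))"
    by (simp add: prob_sum)
  have "(\<Sum>y\<in>?I. sum (pmf p) {x. x \<in> {x\<in>C. x v = a} \<and> restrict x T = y}) = sum (pmf p) {x\<in>C. x v = a}"
    by (rule sum.group) auto
  moreover have "{x. x \<in> {x\<in>C. x v = a} \<and> restrict x T = y} = coord_event (insert v T) (y(v:=a))" if "y \<in> ?I" for y
  proof (intro set_eqI iffI)
    fix x assume "x \<in> {x. x \<in> {x\<in>C. x v = a} \<and> restrict x T = y}"
    then show "x \<in> coord_event (insert v T) (y(v:=a))" unfolding coord_event_def using vT by auto
  next
    fix x assume x: "x \<in> coord_event (insert v T) (y(v:=a))"
    then have "x \<in> C" using det[of y x] yI[OF that] vT unfolding coord_event_def by auto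
    moreover have "restrict x T = y" using x yI(2)[OF that] vT unfolding coord_event_def restrict_def
      by (auto simp: fun_eq_iff)
    moreover have "x v = a" using x unfolding coord_event_def by auto
    ultimately show "x \<in> {x. x \<in> {x\<in>C. x v = a} \<and> restrict x T = y}" by auto
  qed
  ultimately have "measure_pmf.prob p {x\<in>C. x v = a} = (\<Sum>y\<in>?I. measure_pmf.prob p (coord_event (insert v T) (y(v:=a))))"
    by (simp add: prob_sum)
  also have "\<dots> = (\<Sum>y\<in>?I. measure_pmf.prob p (coord_event T y) * Ka)"
    using yI(1) hyp by (intro sum.cong) auto
  also have "\<dots> = measure_pmf.prob p C * Ka" by (simp add: pC sum_distrib_right)
  finally show ?thesis .
qed

lemma lemH:
  fixes p :: "('v::finite \<Rightarrow> 'a::finite) pmf" and f :: "'a \<Rightarrow> 'b"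
  assumes vT: "v \<notin> T"
    and hyp: "\<And>y a. y \<in> img_event f T b \<Longrightarrow> measure_pmf.prob p (coord_event (insert v T) (y(v:=a)))
                 = measure_pmf.prob p (coord_event T y) * Q a"
  shows "measure_pmf.prob p (img_event f {v} b \<inter> img_event f T b)
       = measure_pmf.prob p (img_event f T b) * (\<Sum>a\<in>f -` {b v}. Q a)"
proof -
  let ?C = "img_event f T b"
  have "(\<Sum>a\<in>f -` {b v}. sum (pmf p) {x. x \<in> img_event f {v} b \<inter> ?C \<and> x v = a})
      = sum (pmf p) (img_event f {v} b \<inter> ?C)"
    by (rule sum.group) (auto simp: img_event_def)
  moreover have "\<And>a. {x. x \<in> img_event f {v} b \<inter> ?C \<and> x v = a} = (if f a = b v then {x\<in>?C. x v = a} else {})"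
    by (auto simp: img_event_def)
  ultimately have "measure_pmf.prob p (img_event f {v} b \<inter> ?C) = (\<Sum>a\<in>f -` {b v}. measure_pmf.prob p {x\<in>?C. x v = a})"
    by (simp add: prob_sum)
  also have "\<dots> = (\<Sum>a\<in>f -` {b v}. measure_pmf.prob p ?C * Q a)"
  proof (rule sum.cong[OF refl])
    fix a
    show "measure_pmf.prob p {x\<in>?C. x v = a} = measure_pmf.prob p ?C * Q a"
      by (rule lemG[OF vT _ hyp]) (auto simp: img_event_def)
  qed
  also have "\<dots> = measure_pmf.prob p ?C * (\<Sum>a\<in>f -` {b v}. Q a)" by (simp add: sum_distrib_left)
  finally show ?thesis .
qed

theorem mainTheorem3:
  fixes E :: "('v::finite \<times> 'v) set"
    and p :: "('v \<Rightarrow> 'a::finite) pmf"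
    and f :: "'a \<Rightarrow> 'b"
    and v :: 'v
    and b :: "'v \<Rightarrow> 'b"
  assumes "is_BN E p"
    and "surj f"
    and "\<exists>a. (\<Pi>\<^sub>E w\<in>parents E v. f -` {b w}) = {a}"
    and "measure_pmf.prob p (img_event f (nondesc E v) b) > 0"
  shows "cond_prob p (img_event f {v} b) (img_event f (nondesc E v) b)
       = cond_prob p (img_event f {v} b) (img_event f (parents E v) b)"
proof -
  note bn = assms(1)
  have acyc: "acyclic E" using bn unfolding is_BN_def by auto
  define pa where "pa = parents E v"
  define N where "N = nondesc E v"
  obtain a0 where a0: "(\<Pi>\<^sub>E w\<in>pa. f -` {b w}) = {a0}" using assms(3) pa_def by auto
  have vpa: "v \<notin> pa" using acyc unfolding pa_def parents_def acyclic_def by auto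
  have vN: "v \<notin> N" unfolding N_def nondesc_def by auto
  have paN: "pa \<subseteq> N"
  proof
    fix u assume u: "u \<in> pa"
    then have uv: "(u, v) \<in> E" unfolding pa_def parents_def by auto
    have "(v, u) \<notin> E\<^sup>+"
    proof
      assume "(v, u) \<in> E\<^sup>+"
      then have "(v, v) \<in> E\<^sup>+" using uv by (meson trancl.trancl_into_trancl)
      then show False using acyc unfolding acyclic_def by auto
    qed
    then show "u \<in> N" using u vpa unfolding N_def nondesc_def by auto
  qed
  have ancN: "\<forall>w\<in>N. parents E w \<subseteq> N"
  proof (intro ballI subsetI)
    fix w u assume w: "w \<in> N" and u: "u \<in> parents E w"
    then have uw: "(u, w) \<in> E" unfolding parents_def by auto
    have "u \<noteq> v"
    proof
      assume "u = v" then have "(v, w) \<in> E\<^sup>+" using uw by auto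
      then show False using w unfolding N_def nondesc_def by auto
    qed
    moreover have "(v, u) \<notin> E\<^sup>+"
    proof
      assume "(v, u) \<in> E\<^sup>+" then have "(v, w) \<in> E\<^sup>+" using uw by (meson trancl.trancl_into_trancl)
      then show False using w unfolding N_def nondesc_def by auto
    qed
    ultimately show "u \<in> N" unfolding N_def nondesc_def by auto
  qed
  have ancvN: "\<forall>w\<in>insert v N. parents E w \<subseteq> insert v N"
    using ancN paN unfolding pa_def by auto
  have agree: "\<forall>w\<in>pa. x w = a0 w" if "x \<in> img_event f pa b" for x
  proof -
    have "restrict x pa \<in> (\<Pi>\<^sub>E w\<in>pa. f -` {b w})" using that unfolding img_event_def by auto
    then have "restrict x pa = a0" using a0 by auto
    then show ?thesis by (metis restrict_apply')
  qed
  have CD: "img_event f N b \<subseteq> img_event f pa b" using paN unfolding img_event_def by auto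
  have Dsub: "img_event f pa b \<subseteq> coord_event pa a0" using agree unfolding coord_event_def by auto
  have pC: "measure_pmf.prob p (img_event f N b) > 0" using assms(4) N_def by simp
  have pD: "measure_pmf.prob p (img_event f pa b) > 0"
    using pC measure_pmf.finite_measure_mono[OF CD, of p] by simp
  have P0: "measure_pmf.prob p (coord_event pa a0) > 0"
    using pD measure_pmf.finite_measure_mono[OF Dsub, of p] by simp
  define Q where "Q a = cond_prob p (coord_event {v} (a0(v:=a))) (coord_event pa a0)" for a
  have cpa: "coord_event pa (y(v:=a)) = coord_event pa a0" "coord_event {v} (y(v:=a)) = coord_event {v} (a0(v:=a))"
    if "y \<in> img_event f pa b" for y a
    using agree[OF that] vpa unfolding coord_event_def by auto
  have hypD: "measure_pmf.prob p (coord_event (insert v pa) (y(v:=a)))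
             = measure_pmf.prob p (coord_event pa y) * Q a" if "y \<in> img_event f pa b" for y a
  proof -
    have "coord_event pa y = coord_event pa a0" using cpa[OF that, of undefined] vpa
      by (metis coord_upd)
    then show ?thesis using prob_insert_cond[of p v pa "y(v:=a)"] cpa[OF that] unfolding Q_def
      by simp
  qed
  have hypC: "measure_pmf.prob p (coord_event (insert v N) (y(v:=a)))
             = measure_pmf.prob p (coord_event N y) * Q a" if "y \<in> img_event f N b" for y a
  proof -
    have yD: "y \<in> img_event f pa b" using that CD by auto
    have "measure_pmf.prob p (coord_event (insert v N) (y(v:=a))) = (\<Prod>u\<in>insert v N. Kb E p u (y(v:=a)))"
      by (rule prob_anc[OF bn ancvN])
    also have "\<dots> = Kb E p v (y(v:=a)) * (\<Prod>u\<in>N. Kb E p u (y(v:=a)))" using vN by simp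
    also have "(\<Prod>u\<in>N. Kb E p u (y(v:=a))) = measure_pmf.prob p (coord_event N (y(v:=a)))"
      by (rule prob_anc[OF bn ancN, symmetric])
    also have "coord_event N (y(v:=a)) = coord_event N y" using vN by (rule coord_upd)
    also have "Kb E p v (y(v:=a)) = Q a"
      using cpa[OF yD] P0 unfolding Kb_def Q_def pa_def by simp
    finally show ?thesis by (simp only: mult.commute)
  qed
  let ?S = "\<Sum>a\<in>f -` {b v}. Q a"
  have LC: "measure_pmf.prob p (img_event f {v} b \<inter> img_event f N b) = measure_pmf.prob p (img_event f N b) * ?S"
    by (rule lemH[OF vN hypC])
  have LD: "measure_pmf.prob p (img_event f {v} b \<inter> img_event f pa b) = measure_pmf.prob p (img_event f pa b) * ?S"
    by (rule lemH[OF vpa hypD])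
  show ?thesis unfolding cond_prob_def N_def[symmetric] pa_def[symmetric] LC LD
    using pC pD by simp
qed

end
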